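(* Assume all features are binary, $x_{i,k}\in\{0,1\}$. Let $0<\lambda\le\lambda_0$. Let $\boldsymbol\alpha_0^\star$ be the optimal solution of $\max_{\boldsymbol\alpha\ge\mathbf0}D_{\lambda_0}(\boldsymbol\alpha)$, and let $\boldsymbol\alpha_0\in\mathbb R^{2nK}_{\ge0}$ and $\epsilon\ge0$ satisfy $\|\boldsymbol\alpha_0-\boldsymbol\alpha_0^\star\|_2\le\epsilon$. Let $\mathbf m^\star$ be the optimal solution of $\min_{\mathbf m\ge\mathbf0}P_\lambda(\mathbf m)$. For $k\in[p]$ let $$a=\sum_{i\in[n]}\max\Big\{\sum_{l\in\mathcal D_i}(\alpha_0)_{il}x_{l,k},\;x_{i,k}\Big[\sum_{l\in\mathcal D_i}(\alpha_0)_{il}-\sum_{j\in\mathcal S_i}(\alpha_0)_{ij}(1-x_{j,k})\Big]\Big\},$$ $$b=\sqrt{\sum_{i\in[n]}\Big[\sum_{l\in\mathcal D_i}\max\{x_{i,k},x_{l,k}\}+\sum_{j\in\mathcal S_i}\max\{x_{i,k},x_{j,k}\}\Big]},\qquad\lambda'_a=\frac{\lambda_0(2\epsilon b+\|\boldsymbol\alpha_0\|_2b+a)}{2\lambda_0+\|\boldsymbol\alpha_0\|_2b-a}.$$ If $\lambda'_a\le\lambda\le\lambda_0$, then $m^\star_{k'}=0$ for every descendant $k'\supseteq k$.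
   Context: Let $n,K,p\ge1$ be integers, $[n]=\{1,\dots,n\}$. For each $i\in[n]$ let $\mathbf x_i=(x_{i,1},\dots,x_{i,p})^\top\in\mathbb R^p$ and let $\mathcal D_i,\mathcal S_i\subseteq[n]$ be sets of size $K$. Put $\mathbf c_{ij}=(\mathbf x_i-\mathbf x_j)\circ(\mathbf x_i-\mathbf x_j)$ (entrywise product). Vectors in $\mathbb R^{2nK}$ are indexed by the pairs $(i,l)$, $l\in\mathcal D_i$ ("different-class pairs") and $(i,j)$, $j\in\mathcal S_i$ ("same-class pairs"); $\boldsymbol\alpha_0$ has entries $(\alpha_0)_{il},(\alpha_0)_{ij}$. $\mathbf C\in\mathbb R^{p\times2nK}$ has column $\mathbf c_{il}$ for each different-class pair and $-\mathbf c_{ij}$ for each same-class pair. Fix $L\ge U\ge0$, $\eta>0$; let $\mathbf t\in\mathbb R^{2nK}$ have entry $L$ at different-class pairs and $-U$ at same-class pairs; $\ell_s(x)=([s-x]_+)^2$ with $[z]_+=\max\{z,0\}$ (entrywise for vectors); $\mathbf1$ is the all-ones vector. For $\lambda>0$, $$P_\lambda(\mathbf m)=\sum_{i\in[n]}\Big[\sum_{l\in\mathcal D_i}\ell_L(\mathbf m^\top\mathbf c_{il})+\sum_{j\in\mathcal S_i}\ell_{-U}(-\mathbf m^\top\mathbf c_{ij})\Big]+\lambda\Big(\mathbf m^\top\mathbf1+\frac\eta2\|\mathbf m\|_2^2\Big)\ (\mathbf m\in\mathbb R^p_{\ge0}),$$ $$D_\lambda(\boldsymbol\alpha)=-\frac14\|\boldsymbol\alpha\|_2^2+\mathbf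 t^\top\boldsymbol\alpha-\frac{\lambda\eta}2\Big\|\frac1{\lambda\eta}[\mathbf C\boldsymbol\alpha-\lambda\mathbf1]_+\Big\|_2^2\ (\boldsymbol\alpha\in\mathbb R^{2nK}_{\ge0}).$$ The feature indices $[p]$ are nodes of a rooted graph-mining tree: $x_{i,k}=g(\#(H_k\sqsubseteq G_i))$ with $g(x)=1_{x>0}$, where $H_k$ is the subgraph at node $k$, $G_i$ the $i$-th input graph, $\#(H\sqsubseteq G)$ the number of non-overlapping occurrences of $H$ in $G$, and each node's subgraph is contained in its children's subgraphs. Write $k'\supseteq k$ if $k'$ is a descendant of $k$; then $x_{i,k'}\le x_{i,k}$ for all $i$ whenever $k'\supseteq k$. *)

theory Defs
  imports Complex_Main
begin

text \<open>Graph indices i range over {1..n}, feature indices k over {1..p}.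
  Features: x i k (the k-th entry of the vector x_i). A vector alpha in R^(2nK) is
  represented by a pair of functions (aD, aS): aD i l is the entry at the
  different-class pair (i,l), l in D i; aS i j is the entry at the same-class pair
  (i,j), j in S i. Values outside these index sets are irrelevant.
  A primal vector m in R^p is a function m with relevant entries m k, k in {1..p}.\<close>

definition sqhinge :: "real \<Rightarrow> real \<Rightarrow> real" where
  "sqhinge s z = (max (s - z) 0)^2"

definition mc :: "nat \<Rightarrow> (nat \<Rightarrow> nat \<Rightarrow> real) \<Rightarrow> (nat \<Rightarrow> real) \<Rightarrow> nat \<Rightarrow> nat \<Rightarrow> real" where
  "mc p x m i j = (\<Sum>k\<in>{1..p}. m k * ((x i k - x j k) * (x i k - x j k)))"

definition Primal ::
  "nat \<Rightarrow> nat \<Rightarrow> (nat \<Rightarrow> nat set) \<Rightarrow> (nat \<Rightarrow> nat set) \<Rightarrow> (nat \<Rightarrow> nat \<Rightarrow> real)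
   \<Rightarrow> real \<Rightarrow> real \<Rightarrow> real \<Rightarrow> real \<Rightarrow> (nat \<Rightarrow> real) \<Rightarrow> real" where
  "Primal n p D S x L U \<eta> lam m =
     (\<Sum>i\<in>{1..n}. (\<Sum>l\<in>D i. sqhinge L (mc p x m i l))
                  + (\<Sum>j\<in>S i. sqhinge (- U) (- mc p x m i j)))
     + lam * ((\<Sum>k\<in>{1..p}. m k) + \<eta> / 2 * (\<Sum>k\<in>{1..p}. (m k)^2))"

definition Calpha ::
  "nat \<Rightarrow> (nat \<Rightarrow> nat set) \<Rightarrow> (nat \<Rightarrow> nat set) \<Rightarrow> (nat \<Rightarrow> nat \<Rightarrow> real)
   \<Rightarrow> (nat \<Rightarrow> nat \<Rightarrow> real) \<Rightarrow> (nat \<Rightarrow> nat \<Rightarrow> real) \<Rightarrow> nat \<Rightarrow> real" where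
  "Calpha n D S x aD aS k =
     (\<Sum>i\<in>{1..n}. (\<Sum>l\<in>D i. aD i l * ((x i k - x l k) * (x i k - x l k)))
                  - (\<Sum>j\<in>S i. aS i j * ((x i k - x j k) * (x i k - x j k))))"

definition sqnorm ::
  "nat \<Rightarrow> (nat \<Rightarrow> nat set) \<Rightarrow> (nat \<Rightarrow> nat set) \<Rightarrow> (nat \<Rightarrow> nat \<Rightarrow> real) \<Rightarrow> (nat \<Rightarrow> nat \<Rightarrow> real) \<Rightarrow> real" where
  "sqnorm n D S aD aS = (\<Sum>i\<in>{1..n}. (\<Sum>l\<in>D i. (aD i l)^2) + (\<Sum>j\<in>S i. (aS i j)^2))"

definition Dual ::
  "nat \<Rightarrow> nat \<Rightarrow> (nat \<Rightarrow> nat set) \<Rightarrow> (nat \<Rightarrow> nat set) \<Rightarrow> (nat \<Rightarrow> nat \<Rightarrow> real)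
   \<Rightarrow> real \<Rightarrow> real \<Rightarrow> real \<Rightarrow> real \<Rightarrow> (nat \<Rightarrow> nat \<Rightarrow> real) \<Rightarrow> (nat \<Rightarrow> nat \<Rightarrow> real) \<Rightarrow> real" where
  "Dual n p D S x L U \<eta> lam aD aS =
     - 1/4 * sqnorm n D S aD aS
     + (\<Sum>i\<in>{1..n}. (\<Sum>l\<in>D i. L * aD i l) + (\<Sum>j\<in>S i. (- U) * aS i j))
     - lam * \<eta> / 2 * (\<Sum>k\<in>{1..p}. (1 / (lam * \<eta>) * max (Calpha n D S x aD aS k - lam) 0)^2)"

definition dual_nonneg ::
  "nat \<Rightarrow> (nat \<Rightarrow> nat set) \<Rightarrow> (nat \<Rightarrow> nat set) \<Rightarrow> (nat \<Rightarrow> nat \<Rightarrow> real) \<Rightarrow> (nat \<Rightarrow> nat \<Rightarrow> real) \<Rightarrow> bool" where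
  "dual_nonneg n D S aD aS \<longleftrightarrow>
     (\<forall>i\<in>{1..n}. (\<forall>l\<in>D i. 0 \<le> aD i l) \<and> (\<forall>j\<in>S i. 0 \<le> aS i j))"

end

theory Submission imports Defs "HOL-Analysis.L2_Norm"
begin

definition Cv :: "'q set \<Rightarrow> ('q \<Rightarrow> nat \<Rightarrow> real) \<Rightarrow> ('q \<Rightarrow> real) \<Rightarrow> nat \<Rightarrow> real" where
  "Cv Q c v k = (\<Sum>q\<in>Q. v q * c q k)"
definition Ctm :: "nat set \<Rightarrow> ('q \<Rightarrow> nat \<Rightarrow> real) \<Rightarrow> (nat \<Rightarrow> real) \<Rightarrow> 'q \<Rightarrow> real" where
  "Ctm Ks c m q = (\<Sum>k\<in>Ks. m k * c q k)"
definition PP :: "'q set \<Rightarrow> nat set \<Rightarrow> ('q \<Rightarrow> nat \<Rightarrow> real) \<Rightarrow> ('q \<Rightarrow> real) \<Rightarrow> real \<Rightarrow> real \<Rightarrow> (nat \<Rightarrow> real) \<Rightarrow> real" where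
  "PP Q Ks c t lam eta m = (\<Sum>q\<in>Q. sqhinge (t q) (Ctm Ks c m q))
     + lam * ((\<Sum>k\<in>Ks. m k) + eta / 2 * (\<Sum>k\<in>Ks. (m k)^2))"
definition DD :: "'q set \<Rightarrow> nat set \<Rightarrow> ('q \<Rightarrow> nat \<Rightarrow> real) \<Rightarrow> ('q \<Rightarrow> real) \<Rightarrow> real \<Rightarrow> real \<Rightarrow> ('q \<Rightarrow> real) \<Rightarrow> real" where
  "DD Q Ks c t lam eta v = - 1/4 * (\<Sum>q\<in>Q. (v q)^2) + (\<Sum>q\<in>Q. t q * v q)
     - lam * eta / 2 * (\<Sum>k\<in>Ks. (1 / (lam * eta) * max (Cv Q c v k - lam) 0)^2)"

lemma sqh_bound: fixes y d :: real
  shows "(max (y + d) 0)^2 \<le> (max y 0)^2 + 2 * max y 0 * d + d^2"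
proof (cases "y \<le> 0")
  case True
  then show ?thesis by (cases "y + d \<le> 0") (auto simp: max_def power2_eq_square intro: mult_mono)
next
  case False
  have "0 \<le> (y + d)^2" by simp
  with False show ?thesis by (cases "y + d \<le> 0") (auto simp: max_def power2_eq_square algebra_simps)
qed

lemma sqhinge_bound: "sqhinge s (z + d) \<le> sqhinge s z - 2 * max (s - z) 0 * d + d^2"
  using sqh_bound[of "s - z" "-d"] by (simp add: sqhinge_def algebra_simps)

lemma pos_lim: fixes g C \<delta> :: real
  assumes "\<delta> > 0" "\<And>s. 0 < s \<Longrightarrow> s \<le> \<delta> \<Longrightarrow> 0 \<le> s*g + s^2*C"
  shows "g \<ge> 0"
proof (rule ccontr)
  assume g: "\<not> g \<ge> 0"
  show False
  proof (cases "C \<le> 0")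
    case True
    have "0 \<le> \<delta>*g + \<delta>^2*C" using assms by auto
    moreover have "\<delta>*g < 0" using g assms(1) by (simp add: mult_pos_neg)
    moreover have "\<delta>^2*C \<le> 0" using True by (simp add: mult_nonneg_nonpos)
    ultimately show False by linarith
  next
    case False
    define s where "s = min \<delta> (- g / (2*C))"
    have "g / (2*C) < 0" using g False by (simp add: divide_neg_pos)
    hence s0: "0 < s" using assms(1) by (auto simp: s_def)
    have "s * C \<le> - g / 2" using False by (auto simp: s_def min_def field_simps split: if_splits)
    hence "g + s*C < 0" using g by linarith
    hence "s * (g + s*C) < 0" using s0 by (simp add: mult_pos_neg)
    moreover have "0 \<le> s*g + s^2*C" using assms(2)[of s] s0 by (auto simp: s_def)
    ultimately show False by (simp add: power2_eq_square algebra_simps)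
  qed
qed

lemma perturb_primal:
  fixes Q :: "'q set" and Ks :: "nat set" and t :: "'q \<Rightarrow> real" and c :: "'q \<Rightarrow> nat \<Rightarrow> real"
    and m :: "nat \<Rightarrow> real"
  assumes fin: "finite Q" "finite Ks" and k: "k \<in> Ks"
  defines "a1 \<equiv> (\<lambda>q. 2 * max (t q - Ctm Ks c m q) 0)"
  shows "PP Q Ks c t lam eta (\<lambda>j. m j + (if j = k then s else 0)) \<le>
         PP Q Ks c t lam eta m + s * (- Cv Q c a1 k + lam * (1 + eta * m k))
         + s^2 * ((\<Sum>q\<in>Q. (c q k)^2) + lam * eta / 2)"
proof -
  define m' where "m' = (\<lambda>j. m j + (if j = k then s else 0))"
  have ctm: "Ctm Ks c m' q = Ctm Ks c m q + s * c q k" for q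
  proof -
    have "Ctm Ks c m' q = (\<Sum>j\<in>Ks. m j * c q j + (if j = k then s * c q k else 0))"
      unfolding Ctm_def m'_def by (rule sum.cong) (auto simp: algebra_simps)
    also have "\<dots> = Ctm Ks c m q + s * c q k" using fin k by (simp add: sum.distrib Ctm_def)
    finally show ?thesis .
  qed
  have loss: "(\<Sum>q\<in>Q. sqhinge (t q) (Ctm Ks c m' q)) \<le>
      (\<Sum>q\<in>Q. sqhinge (t q) (Ctm Ks c m q) - 2 * max (t q - Ctm Ks c m q) 0 * (s * c q k) + (s * c q k)^2)"
    unfolding ctm by (rule sum_mono) (rule sqhinge_bound)
  also have "\<dots> = (\<Sum>q\<in>Q. sqhinge (t q) (Ctm Ks c m q)) - s * Cv Q c a1 k + s^2 * (\<Sum>q\<in>Q. (c q k)^2)"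
    by (simp add: sum.distrib sum_subtractf Cv_def a1_def sum_distrib_left power_mult_distrib algebra_simps)
  finally have loss': "(\<Sum>q\<in>Q. sqhinge (t q) (Ctm Ks c m' q)) \<le> \<dots>" .
  have r1: "(\<Sum>j\<in>Ks. m' j) = (\<Sum>j\<in>Ks. m j) + s"
    using fin k by (simp add: m'_def sum.distrib sum.delta)
  have "(\<Sum>j\<in>Ks. (m' j)^2) = (\<Sum>j\<in>Ks. (m j)^2 + (if j = k then 2 * m k * s + s^2 else 0))"
    by (rule sum.cong) (auto simp: m'_def power2_eq_square algebra_simps)
  also have "\<dots> = (\<Sum>j\<in>Ks. (m j)^2) + 2 * m k * s + s^2"
    using fin k by (simp add: sum.distrib sum.delta)
  finally have r2: "(\<Sum>j\<in>Ks. (m' j)^2) = (\<Sum>j\<in>Ks. (m j)^2) + 2 * m k * s + s^2" .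
  show ?thesis
    using loss' unfolding m'_def[symmetric] PP_def r1 r2
    by (simp add: algebra_simps power2_eq_square)
qed

lemma primal_kkt:
  fixes Q :: "'q set" and Ks :: "nat set" and t :: "'q \<Rightarrow> real" and c :: "'q \<Rightarrow> nat \<Rightarrow> real"
    and m :: "nat \<Rightarrow> real"
  assumes fin: "finite Q" "finite Ks" and lam: "lam > 0" and eta: "eta > 0"
    and mnn: "\<forall>k\<in>Ks. 0 \<le> m k"
    and opt: "\<And>m'. \<forall>k\<in>Ks. 0 \<le> m' k \<Longrightarrow> PP Q Ks c t lam eta m \<le> PP Q Ks c t lam eta m'"
    and k: "k \<in> Ks"
  defines "a1 \<equiv> (\<lambda>q. 2 * max (t q - Ctm Ks c m q) 0)"
  shows "m k = max (Cv Q c a1 k - lam) 0 / (lam * eta)"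
proof -
  define g where "g = - Cv Q c a1 k + lam * (1 + eta * m k)"
  define C where "C = (\<Sum>q\<in>Q. (c q k)^2) + lam * eta / 2"
  have pb: "PP Q Ks c t lam eta (\<lambda>j. m j + (if j = k then s else 0)) \<le> PP Q Ks c t lam eta m + s * g + s^2 * C" for s
    using perturb_primal[OF fin k, where t=t and c=c and m=m and lam=lam and eta=eta and s=s] unfolding g_def C_def a1_def by simp
  have g0: "g \<ge> 0"
  proof (rule pos_lim[of 1 g C])
    fix s :: real assume s: "0 < s" "s \<le> 1"
    have "\<forall>j\<in>Ks. 0 \<le> m j + (if j = k then s else 0)" using mnn s by auto
    from opt[OF this] pb[of s] show "0 \<le> s * g + s^2 * C" by linarith
  qed simp
  show ?thesis
  proof (cases "m k > 0")
    case True
    have "- g \<ge> 0"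
    proof (rule pos_lim[of "m k" "- g" C])
      fix s :: real assume s: "0 < s" "s \<le> m k"
      have "\<forall>j\<in>Ks. 0 \<le> m j + (if j = k then - s else 0)" using mnn s by auto
      from opt[OF this] pb[of "- s"] show "0 \<le> s * (- g) + s^2 * C" by simp
    qed (use True in simp)
    with g0 have "g = 0" by simp
    hence e: "Cv Q c a1 k - lam = lam * eta * m k" unfolding g_def by (simp add: algebra_simps)
    have "lam * eta * m k > 0" using True lam eta by simp
    then show ?thesis unfolding e using lam eta by (simp add: max_def)
  next
    case False
    hence "m k = 0" using mnn k by force
    moreover have "Cv Q c a1 k - lam \<le> 0" using g0 unfolding g_def \<open>m k = 0\<close> by simp
    ultimately show ?thesis by (simp add: max_def)
  qed
qed

lemma third_term: fixes lam eta :: real assumes "lam * eta \<noteq> 0"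
  shows "lam * eta / 2 * (\<Sum>k\<in>Ks. (1 / (lam * eta) * X k)^2) = (\<Sum>k\<in>Ks. (X k)^2) / (2 * lam * eta)"
  using assms by (simp add: sum_distrib_left sum_divide_distrib power_mult_distrib power2_eq_square field_simps)

lemma perturb_dual:
  fixes Q :: "'q set" and Ks :: "nat set" and t :: "'q \<Rightarrow> real" and c :: "'q \<Rightarrow> nat \<Rightarrow> real"
    and v \<delta> :: "'q \<Rightarrow> real"
  assumes fin: "finite Q" "finite Ks" and lam: "lam > 0" and eta: "eta > 0"
  defines "M \<equiv> (\<lambda>k. max (Cv Q c v k - lam) 0 / (lam * eta))"
  shows "DD Q Ks c t lam eta (\<lambda>q. v q + s * \<delta> q) \<ge>
     DD Q Ks c t lam eta v + s * (\<Sum>q\<in>Q. (- v q / 2 + t q - (\<Sum>k\<in>Ks. M k * c q k)) * \<delta> q)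
     - s^2 * (1/4 * (\<Sum>q\<in>Q. (\<delta> q)^2) + (\<Sum>k\<in>Ks. (Cv Q c \<delta> k)^2) / (2 * lam * eta))"
proof -
  have le: "lam * eta \<noteq> 0" using lam eta by simp
  have cv: "Cv Q c (\<lambda>q. v q + s * \<delta> q) k = Cv Q c v k + s * Cv Q c \<delta> k" for k
    by (simp add: Cv_def sum.distrib sum_distrib_left algebra_simps)
  have T: "(\<Sum>k\<in>Ks. (max (Cv Q c (\<lambda>q. v q + s * \<delta> q) k - lam) 0)^2) \<le>
     (\<Sum>k\<in>Ks. (max (Cv Q c v k - lam) 0)^2 + 2 * max (Cv Q c v k - lam) 0 * (s * Cv Q c \<delta> k) + (s * Cv Q c \<delta> k)^2)"
    unfolding cv
  proof (rule sum_mono)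
    fix k show "(max (Cv Q c v k + s * Cv Q c \<delta> k - lam) 0)\<^sup>2
         \<le> (max (Cv Q c v k - lam) 0)\<^sup>2 + 2 * max (Cv Q c v k - lam) 0 * (s * Cv Q c \<delta> k) + (s * Cv Q c \<delta> k)\<^sup>2"
      using sqh_bound[of "Cv Q c v k - lam" "s * Cv Q c \<delta> k"] by (simp add: algebra_simps)
  qed
  have sw: "(\<Sum>k\<in>Ks. 2 * max (Cv Q c v k - lam) 0 * (s * Cv Q c \<delta> k)) =
     2 * lam * eta * s * (\<Sum>q\<in>Q. \<delta> q * (\<Sum>k\<in>Ks. M k * c q k))"
  proof -
    have "(\<Sum>k\<in>Ks. 2 * max (Cv Q c v k - lam) 0 * (s * Cv Q c \<delta> k)) =
          (\<Sum>k\<in>Ks. 2 * lam * eta * s * (M k * Cv Q c \<delta> k))"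
      by (rule sum.cong) (use le in \<open>auto simp: M_def field_simps\<close>)
    also have "\<dots> = 2 * lam * eta * s * (\<Sum>k\<in>Ks. \<Sum>q\<in>Q. M k * (\<delta> q * c q k))"
      by (simp add: sum_distrib_left Cv_def)
    also have "\<dots> = 2 * lam * eta * s * (\<Sum>q\<in>Q. \<delta> q * (\<Sum>k\<in>Ks. M k * c q k))"
      by (subst sum.swap) (simp add: sum_distrib_left algebra_simps)
    finally show ?thesis .
  qed
  have T2: "(\<Sum>k\<in>Ks. (max (Cv Q c (\<lambda>q. v q + s * \<delta> q) k - lam) 0)^2) \<le>
     (\<Sum>k\<in>Ks. (max (Cv Q c v k - lam) 0)^2) + 2 * lam * eta * s * (\<Sum>q\<in>Q. \<delta> q * (\<Sum>k\<in>Ks. M k * c q k))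
     + s^2 * (\<Sum>k\<in>Ks. (Cv Q c \<delta> k)^2)"
    using T unfolding sum.distrib sw by (simp add: power_mult_distrib sum_distrib_left)
  have T3: "(\<Sum>k\<in>Ks. (max (Cv Q c (\<lambda>q. v q + s * \<delta> q) k - lam) 0)^2) / (2 * lam * eta) \<le>
     (\<Sum>k\<in>Ks. (max (Cv Q c v k - lam) 0)^2) / (2 * lam * eta) + s * (\<Sum>q\<in>Q. \<delta> q * (\<Sum>k\<in>Ks. M k * c q k))
     + s^2 * ((\<Sum>k\<in>Ks. (Cv Q c \<delta> k)^2) / (2 * lam * eta))"
  proof -
    have "(\<Sum>k\<in>Ks. (max (Cv Q c (\<lambda>q. v q + s * \<delta> q) k - lam) 0)^2) / (2 * lam * eta) \<le>
      ((\<Sum>k\<in>Ks. (max (Cv Q c v k - lam) 0)^2) + 2 * lam * eta * s * (\<Sum>q\<in>Q. \<delta> q * (\<Sum>k\<in>Ks. M k * c q k))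
     + s^2 * (\<Sum>k\<in>Ks. (Cv Q c \<delta> k)^2)) / (2 * lam * eta)"
      using T2 lam eta by (simp add: divide_right_mono)
    also have "\<dots> = (\<Sum>k\<in>Ks. (max (Cv Q c v k - lam) 0)^2) / (2 * lam * eta) + s * (\<Sum>q\<in>Q. \<delta> q * (\<Sum>k\<in>Ks. M k * c q k))
     + s^2 * ((\<Sum>k\<in>Ks. (Cv Q c \<delta> k)^2) / (2 * lam * eta))"
      using le by (simp add: field_simps)
    finally show ?thesis .
  qed
  have Q1: "(\<Sum>q\<in>Q. (v q + s * \<delta> q)^2) = (\<Sum>q\<in>Q. (v q)^2) + 2 * s * (\<Sum>q\<in>Q. v q * \<delta> q) + s^2 * (\<Sum>q\<in>Q. (\<delta> q)^2)"
    by (simp add: power2_sum sum.distrib sum_distrib_left power_mult_distrib algebra_simps)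
  have Q2: "(\<Sum>q\<in>Q. t q * (v q + s * \<delta> q)) = (\<Sum>q\<in>Q. t q * v q) + s * (\<Sum>q\<in>Q. t q * \<delta> q)"
    by (simp add: sum.distrib sum_distrib_left algebra_simps)
  have G: "(\<Sum>q\<in>Q. (- v q / 2 + t q - (\<Sum>k\<in>Ks. M k * c q k)) * \<delta> q) =
     - (\<Sum>q\<in>Q. v q * \<delta> q) / 2 + (\<Sum>q\<in>Q. t q * \<delta> q) - (\<Sum>q\<in>Q. \<delta> q * (\<Sum>k\<in>Ks. M k * c q k))"
    by (simp add: sum.distrib sum_subtractf sum_divide_distrib algebra_simps)
  show ?thesis
    unfolding DD_def third_term[OF le] Q1 Q2 G using T3 by (simp add: algebra_simps)
qed

lemma dual_vi:
  fixes Q :: "'q set" and Ks :: "nat set" and t :: "'q \<Rightarrow> real" and c :: "'q \<Rightarrow> nat \<Rightarrow> real"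
    and v \<beta> :: "'q \<Rightarrow> real"
  assumes fin: "finite Q" "finite Ks" and lam: "lam > 0" and eta: "eta > 0"
    and vnn: "\<forall>q\<in>Q. 0 \<le> v q"
    and opt: "\<And>b. \<forall>q\<in>Q. 0 \<le> b q \<Longrightarrow> DD Q Ks c t lam eta b \<le> DD Q Ks c t lam eta v"
    and bnn: "\<forall>q\<in>Q. 0 \<le> \<beta> q"
  defines "M \<equiv> (\<lambda>k. max (Cv Q c v k - lam) 0 / (lam * eta))"
  shows "(\<Sum>q\<in>Q. (- v q / 2 + t q - (\<Sum>k\<in>Ks. M k * c q k)) * (\<beta> q - v q)) \<le> 0"
proof -
  define G where "G = (\<Sum>q\<in>Q. (- v q / 2 + t q - (\<Sum>k\<in>Ks. M k * c q k)) * (\<beta> q - v q))"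
  define Cst where "Cst = 1/4 * (\<Sum>q\<in>Q. (\<beta> q - v q)^2) + (\<Sum>k\<in>Ks. (Cv Q c (\<lambda>q. \<beta> q - v q) k)^2) / (2 * lam * eta)"
  have "0 \<le> - G"
  proof (rule pos_lim[of 1 "- G" Cst])
    fix s :: real assume s: "0 < s" "s \<le> 1"
    have nn: "\<forall>q\<in>Q. 0 \<le> v q + s * (\<beta> q - v q)"
    proof
      fix q assume q: "q \<in> Q"
      have "v q + s * (\<beta> q - v q) = (1 - s) * v q + s * \<beta> q" by (simp add: algebra_simps)
      also have "\<dots> \<ge> 0" using s vnn bnn q by simp
      finally show "0 \<le> v q + s * (\<beta> q - v q)" .
    qed
    have "DD Q Ks c t lam eta (\<lambda>q. v q + s * (\<beta> q - v q)) \<ge> DD Q Ks c t lam eta v + s * G - s^2 * Cst"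
      using perturb_dual[OF fin lam eta, where t=t and c=c and v=v and \<delta>="\<lambda>q. \<beta> q - v q" and s=s]
      unfolding G_def Cst_def M_def by simp
    with opt[OF nn] show "0 \<le> s * (- G) + s^2 * Cst" by simp
  qed simp
  thus ?thesis unfolding G_def by simp
qed

lemma mono_max_aux: fixes y0 y1 eta :: real assumes "eta > 0"
  shows "(max (y0 - 1) 0 / eta - max (y1 - 1) 0 / eta) * (y1 - y0) \<le> 0"
proof -
  have "(max (y0 - 1) 0 - max (y1 - 1) 0) * (y1 - y0) \<le> 0"
    by (cases "y0 \<le> y1") (auto simp: max_def mult_nonneg_nonpos mult_nonpos_nonneg mult_nonpos_nonpos mult_le_0_iff)
  hence "(max (y0 - 1) 0 - max (y1 - 1) 0) * (y1 - y0) / eta \<le> 0" using assms by (simp add: divide_nonpos_pos)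
  thus ?thesis by (simp add: diff_divide_distrib[symmetric] algebra_simps)
qed

lemma ball_lemma:
  fixes Q :: "'q set" and Ks :: "nat set" and t :: "'q \<Rightarrow> real" and c :: "'q \<Rightarrow> nat \<Rightarrow> real"
    and a0 a1 :: "'q \<Rightarrow> real"
  assumes fin: "finite Q" "finite Ks" and lam: "lam > 0" "lam \<le> lam0" and eta: "eta > 0"
    and a0nn: "\<forall>q\<in>Q. 0 \<le> a0 q" and a1nn: "\<forall>q\<in>Q. 0 \<le> a1 q"
  defines "M1 \<equiv> (\<lambda>k. max (Cv Q c a1 k - lam) 0 / (lam * eta))"
    and "M0 \<equiv> (\<lambda>k. max (Cv Q c a0 k - lam0) 0 / (lam0 * eta))"
  assumes vi1: "\<And>b. \<forall>q\<in>Q. 0 \<le> b q \<Longrightarrow> (\<Sum>q\<in>Q. (- a1 q / 2 + t q - (\<Sum>k\<in>Ks. M1 k * c q k)) * (b q - a1 q)) \<le> 0"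
    and vi0: "\<And>b. \<forall>q\<in>Q. 0 \<le> b q \<Longrightarrow> (\<Sum>q\<in>Q. (- a0 q / 2 + t q - (\<Sum>k\<in>Ks. M0 k * c q k)) * (b q - a0 q)) \<le> 0"
  shows "(\<Sum>q\<in>Q. (a1 q - (lam0 + lam) / (2 * lam0) * a0 q)^2) \<le> ((lam0 - lam) / (2 * lam0))^2 * (\<Sum>q\<in>Q. (a0 q)^2)"
proof -
  have l0: "lam0 > 0" using lam by simp
  define g1 where "g1 q = - a1 q / 2 + t q - (\<Sum>k\<in>Ks. M1 k * c q k)" for q
  define g0 where "g0 q = - a0 q / 2 + t q - (\<Sum>k\<in>Ks. M0 k * c q k)" for q
  define z where "z q = a1 q / lam - a0 q / lam0" for q
  have A1: "(\<Sum>q\<in>Q. g1 q * (lam / lam0 * a0 q - a1 q)) \<le> 0"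
    using vi1[of "\<lambda>q. lam / lam0 * a0 q"] a0nn lam l0 unfolding g1_def by simp
  have A0: "(\<Sum>q\<in>Q. g0 q * (lam0 / lam * a1 q - a0 q)) \<le> 0"
    using vi0[of "\<lambda>q. lam0 / lam * a1 q"] a1nn lam l0 unfolding g0_def by simp
  have E1: "(\<Sum>q\<in>Q. g1 q * (lam / lam0 * a0 q - a1 q)) = - lam * (\<Sum>q\<in>Q. g1 q * z q)"
    unfolding sum_distrib_left by (rule sum.cong) (use lam l0 in \<open>auto simp: z_def field_simps\<close>)
  have E0: "(\<Sum>q\<in>Q. g0 q * (lam0 / lam * a1 q - a0 q)) = lam0 * (\<Sum>q\<in>Q. g0 q * z q)"
    unfolding sum_distrib_left by (rule sum.cong) (use lam l0 in \<open>auto simp: z_def field_simps\<close>)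
  have S: "(\<Sum>q\<in>Q. (g0 q - g1 q) * z q) \<le> 0"
  proof -
    have "(\<Sum>q\<in>Q. g1 q * z q) \<ge> 0" using A1 E1 lam by (simp add: zero_le_mult_iff)
    moreover have "(\<Sum>q\<in>Q. g0 q * z q) \<le> 0" using A0 E0 l0 by (simp add: mult_le_0_iff)
    ultimately show ?thesis by (simp add: left_diff_distrib sum_subtractf)
  qed
  have mono: "(\<Sum>q\<in>Q. (\<Sum>k\<in>Ks. (M0 k - M1 k) * c q k) * z q) \<le> 0"
  proof -
    have "(\<Sum>q\<in>Q. (\<Sum>k\<in>Ks. (M0 k - M1 k) * c q k) * z q) = (\<Sum>k\<in>Ks. (M0 k - M1 k) * (Cv Q c a1 k / lam - Cv Q c a0 k / lam0))"
    proof -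
      have cz: "(\<Sum>q\<in>Q. c q k * z q) = Cv Q c a1 k / lam - Cv Q c a0 k / lam0" for k
        unfolding z_def Cv_def sum_divide_distrib sum_subtractf[symmetric]
        by (rule sum.cong) (auto simp: algebra_simps diff_divide_distrib)
      have "(\<Sum>q\<in>Q. (\<Sum>k\<in>Ks. (M0 k - M1 k) * c q k) * z q) = (\<Sum>q\<in>Q. \<Sum>k\<in>Ks. (M0 k - M1 k) * (c q k * z q))"
        by (rule sum.cong) (simp_all add: sum_distrib_right sum_distrib_left algebra_simps)
      also have "\<dots> = (\<Sum>k\<in>Ks. \<Sum>q\<in>Q. (M0 k - M1 k) * (c q k * z q))" by (rule sum.swap)
      also have "\<dots> = (\<Sum>k\<in>Ks. (M0 k - M1 k) * (Cv Q c a1 k / lam - Cv Q c a0 k / lam0))"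
        by (simp add: sum_distrib_left[symmetric] cz)
      finally show ?thesis .
    qed
    also have "\<dots> \<le> 0"
    proof (rule sum_nonpos)
      fix k
      have "M1 k = max (Cv Q c a1 k / lam - 1) 0 / eta"
        unfolding M1_def using lam eta by (simp add: max_def field_simps)
      moreover have "M0 k = max (Cv Q c a0 k / lam0 - 1) 0 / eta"
        unfolding M0_def using l0 eta by (simp add: max_def field_simps)
      ultimately show "(M0 k - M1 k) * (Cv Q c a1 k / lam - Cv Q c a0 k / lam0) \<le> 0"
        using mono_max_aux[OF eta] by simp
    qed
    finally show ?thesis .
  qed
  have gd: "g0 q - g1 q = (a1 q - a0 q) / 2 - (\<Sum>k\<in>Ks. (M0 k - M1 k) * c q k)" for q
    unfolding g0_def g1_def by (simp add: left_diff_distrib sum_subtractf field_simps)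
  have K: "(\<Sum>q\<in>Q. (a1 q - a0 q) * z q) \<le> 0"
  proof -
    have h2: "(\<Sum>q\<in>Q. (a1 q - a0 q) / 2 * z q) = (\<Sum>q\<in>Q. (a1 q - a0 q) * z q) / 2"
      unfolding sum_divide_distrib by (rule sum.cong) auto
    have "(\<Sum>q\<in>Q. (g0 q - g1 q) * z q) = (\<Sum>q\<in>Q. (a1 q - a0 q) / 2 * z q) - (\<Sum>q\<in>Q. (\<Sum>k\<in>Ks. (M0 k - M1 k) * c q k) * z q)"
      unfolding gd left_diff_distrib sum_subtractf ..
    hence "(\<Sum>q\<in>Q. (g0 q - g1 q) * z q) = (\<Sum>q\<in>Q. (a1 q - a0 q) * z q) / 2 - (\<Sum>q\<in>Q. (\<Sum>k\<in>Ks. (M0 k - M1 k) * c q k) * z q)"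
      unfolding h2 .
    thus ?thesis using S mono by linarith
  qed
  have "(\<Sum>q\<in>Q. (a1 q - (lam0 + lam) / (2 * lam0) * a0 q)^2) - ((lam0 - lam) / (2 * lam0))^2 * (\<Sum>q\<in>Q. (a0 q)^2)
     = lam * (\<Sum>q\<in>Q. (a1 q - a0 q) * z q)"
    unfolding sum_distrib_left sum_subtractf[symmetric]
    by (rule sum.cong) (use lam l0 in \<open>auto simp: z_def field_simps power2_eq_square\<close>)
  also have "\<dots> \<le> 0" using K lam by (simp add: mult_le_0_iff)
  finally show ?thesis by simp
qed

definition QQ :: "nat \<Rightarrow> (nat \<Rightarrow> nat set) \<Rightarrow> (nat \<Rightarrow> nat set) \<Rightarrow> ((nat \<times> nat) + (nat \<times> nat)) set" where
  "QQ n D S = (SIGMA i:{1..n}. D i) <+> (SIGMA i:{1..n}. S i)"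
definition vec :: "(nat \<Rightarrow> nat \<Rightarrow> real) \<Rightarrow> (nat \<Rightarrow> nat \<Rightarrow> real) \<Rightarrow> (nat \<times> nat) + (nat \<times> nat) \<Rightarrow> real" where
  "vec aD aS q = (case q of Inl (i, l) \<Rightarrow> aD i l | Inr (i, j) \<Rightarrow> aS i j)"
definition cc :: "(nat \<Rightarrow> nat \<Rightarrow> real) \<Rightarrow> (nat \<times> nat) + (nat \<times> nat) \<Rightarrow> nat \<Rightarrow> real" where
  "cc x q k = (case q of Inl (i, l) \<Rightarrow> (x i k - x l k) * (x i k - x l k)
                       | Inr (i, j) \<Rightarrow> - ((x i k - x j k) * (x i k - x j k)))"
definition tt :: "real \<Rightarrow> real \<Rightarrow> (nat \<times> nat) + (nat \<times> nat) \<Rightarrow> real" where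
  "tt L U q = (case q of Inl _ \<Rightarrow> L | Inr _ \<Rightarrow> - U)"

lemma vec_simps[simp]: "vec aD aS (Inl (i, l)) = aD i l" "vec aD aS (Inr (i, j)) = aS i j"
  by (simp_all add: vec_def)
lemma cc_simps[simp]: "cc x (Inl (i, l)) k = (x i k - x l k) * (x i k - x l k)"
  "cc x (Inr (i, j)) k = - ((x i k - x j k) * (x i k - x j k))"
  by (simp_all add: cc_def)
lemma tt_simps[simp]: "tt L U (Inl a) = L" "tt L U (Inr a) = - U"
  by (simp_all add: tt_def)

lemma sum_QQ:
  assumes fD: "\<And>i. i \<in> {1..n} \<Longrightarrow> finite (D i)" and fS: "\<And>i. i \<in> {1..n} \<Longrightarrow> finite (S i)"
  shows "(\<Sum>q\<in>QQ n D S. f q) = (\<Sum>i\<in>{1..n}. (\<Sum>l\<in>D i. f (Inl (i, l))) + (\<Sum>j\<in>S i. f (Inr (i, j))))"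
proof -
  have f1: "finite (SIGMA i:{1..n}. D i)" using fD by (intro finite_SigmaI) auto
  have f2: "finite (SIGMA i:{1..n}. S i)" using fS by (intro finite_SigmaI) auto
  have "(\<Sum>q\<in>QQ n D S. f q) = (\<Sum>z\<in>(SIGMA i:{1..n}. D i). f (Inl z)) + (\<Sum>z\<in>(SIGMA i:{1..n}. S i). f (Inr z))"
    unfolding QQ_def using sum.Plus[OF f1 f2, of f] by (simp add: comp_def)
  also have "\<dots> = (\<Sum>i\<in>{1..n}. \<Sum>l\<in>D i. f (Inl (i, l))) + (\<Sum>i\<in>{1..n}. \<Sum>j\<in>S i. f (Inr (i, j)))"
    using fD fS by (simp add: sum.Sigma split_def)
  finally show ?thesis by (simp add: sum.distrib)
qed

lemma finite_QQ:
  assumes fD: "\<And>i. i \<in> {1..n} \<Longrightarrow> finite (D i)" and fS: "\<And>i. i \<in> {1..n} \<Longrightarrow> finite (S i)"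
  shows "finite (QQ n D S)"
  unfolding QQ_def using fD fS by (intro finite_Plus finite_SigmaI) auto

context
  fixes n :: nat and D S :: "nat \<Rightarrow> nat set"
  assumes fD: "\<And>i. i \<in> {1..n} \<Longrightarrow> finite (D i)" and fS: "\<And>i. i \<in> {1..n} \<Longrightarrow> finite (S i)"
begin

lemma calpha_eq: "Calpha n D S x aD aS k = Cv (QQ n D S) (cc x) (vec aD aS) k"
  unfolding Cv_def Calpha_def apply (subst sum_QQ[OF fD fS]) apply assumption
  by (simp add: sum_negf)

lemma sqnorm_eq: "sqnorm n D S aD aS = (\<Sum>q\<in>QQ n D S. (vec aD aS q)^2)"
  unfolding sqnorm_def apply (subst sum_QQ[OF fD fS]) apply assumption by simp

lemma nonneg_eq: "dual_nonneg n D S aD aS \<longleftrightarrow> (\<forall>q\<in>QQ n D S. 0 \<le> vec aD aS q)"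
proof
  assume "dual_nonneg n D S aD aS"
  then show "\<forall>q\<in>QQ n D S. 0 \<le> vec aD aS q" unfolding dual_nonneg_def QQ_def by auto
next
  assume h: "\<forall>q\<in>QQ n D S. 0 \<le> vec aD aS q"
  have "0 \<le> aD i l" if "i \<in> {1..n}" "l \<in> D i" for i l
  proof -
    have "Inl (i, l) \<in> QQ n D S" using that unfolding QQ_def by blast
    from h[rule_format, OF this] show ?thesis by simp
  qed
  moreover have "0 \<le> aS i l" if "i \<in> {1..n}" "l \<in> S i" for i l
  proof -
    have "Inr (i, l) \<in> QQ n D S" using that unfolding QQ_def by blast
    from h[rule_format, OF this] show ?thesis by simp
  qed
  ultimately show "dual_nonneg n D S aD aS" unfolding dual_nonneg_def by auto
qed

lemma primal_eq: "Primal n p D S x L U \<eta> lam m = PP (QQ n D S) {1..p} (cc x) (tt L U) lam \<eta> m"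
proof -
  have a: "Ctm {1..p} (cc x) m (Inl (i, l)) = mc p x m i l" for i l
    by (simp add: Ctm_def mc_def)
  have b: "Ctm {1..p} (cc x) m (Inr (i, l)) = - mc p x m i l" for i l
    by (simp add: Ctm_def mc_def sum_negf)
  show ?thesis unfolding PP_def Primal_def apply (subst sum_QQ[OF fD fS]) apply assumption
    unfolding a b by simp
qed

lemma dual_eq: "Dual n p D S x L U \<eta> lam aD aS = DD (QQ n D S) {1..p} (cc x) (tt L U) lam \<eta> (vec aD aS)"
  unfolding DD_def Dual_def calpha_eq sqnorm_eq[symmetric]
  apply (subst sum_QQ[OF fD fS]) apply assumption
  by (simp add: sum_negf)

end
definition Aof :: "nat \<Rightarrow> (nat \<Rightarrow> nat set) \<Rightarrow> (nat \<Rightarrow> nat set) \<Rightarrow> (nat \<Rightarrow> nat \<Rightarrow> real) \<Rightarrow> nat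
    \<Rightarrow> ((nat \<times> nat) + (nat \<times> nat) \<Rightarrow> real) \<Rightarrow> real" where
  "Aof n D S x k \<alpha> = (\<Sum>i\<in>{1..n}. max (\<Sum>l\<in>D i. \<alpha> (Inl (i, l)) * x l k)
       (x i k * ((\<Sum>l\<in>D i. \<alpha> (Inl (i, l))) - (\<Sum>j\<in>S i. \<alpha> (Inr (i, j)) * (1 - x j k)))))"

definition ww :: "(nat \<Rightarrow> nat \<Rightarrow> real) \<Rightarrow> nat \<Rightarrow> (nat \<times> nat) + (nat \<times> nat) \<Rightarrow> real" where
  "ww x k q = (case q of Inl (i, l) \<Rightarrow> max (x i k) (x l k) | Inr (i, j) \<Rightarrow> max (x i k) (x j k))"

lemma ww_simps[simp]: "ww x k (Inl (i, l)) = max (x i k) (x l k)" "ww x k (Inr (i, j)) = max (x i k) (x j k)"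
  by (simp_all add: ww_def)

lemma bin_sq: "(y::real) = 0 \<or> y = 1 \<Longrightarrow> y * y = y" by auto

context
  fixes n :: nat and D S :: "nat \<Rightarrow> nat set" and x :: "nat \<Rightarrow> nat \<Rightarrow> real" and k :: nat
  assumes Dsub: "\<And>i. i \<in> {1..n} \<Longrightarrow> D i \<subseteq> {1..n}" and Ssub: "\<And>i. i \<in> {1..n} \<Longrightarrow> S i \<subseteq> {1..n}"
    and bink: "\<And>i. i \<in> {1..n} \<Longrightarrow> x i k = 0 \<or> x i k = 1"
begin

lemma fD': "i \<in> {1..n} \<Longrightarrow> finite (D i)" using Dsub finite_subset by blast
lemma fS': "i \<in> {1..n} \<Longrightarrow> finite (S i)" using Ssub finite_subset by blast

lemma calpha_le_A:
  assumes bink': "\<And>i. i \<in> {1..n} \<Longrightarrow> x i k' = 0 \<or> x i k' = 1"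
    and anti: "\<And>i. i \<in> {1..n} \<Longrightarrow> x i k' \<le> x i k"
    and ann: "\<forall>q\<in>QQ n D S. 0 \<le> \<alpha> q"
  shows "Cv (QQ n D S) (cc x) \<alpha> k' \<le> Aof n D S x k \<alpha>"
proof -
  have "Cv (QQ n D S) (cc x) \<alpha> k' = (\<Sum>i\<in>{1..n}. (\<Sum>l\<in>D i. \<alpha> (Inl (i, l)) * ((x i k' - x l k') * (x i k' - x l k')))
         + (\<Sum>j\<in>S i. \<alpha> (Inr (i, j)) * - ((x i k' - x j k') * (x i k' - x j k'))))"
    unfolding Cv_def apply (subst sum_QQ[OF fD' fS']) apply assumption by simp
  also have "\<dots> \<le> Aof n D S x k \<alpha>"
    unfolding Aof_def
  proof (rule sum_mono)
    fix i assume i: "i \<in> {1..n}"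
    have aD: "0 \<le> \<alpha> (Inl (i, l))" if "l \<in> D i" for l
      using ann that i unfolding QQ_def by blast
    have aS: "0 \<le> \<alpha> (Inr (i, j))" if "j \<in> S i" for j
      using ann that i unfolding QQ_def by blast
    have lD: "l \<in> {1..n}" if "l \<in> D i" for l using Dsub[OF i] that by blast
    have lS: "l \<in> {1..n}" if "l \<in> S i" for l using Ssub[OF i] that by blast
    show "(\<Sum>l\<in>D i. \<alpha> (Inl (i, l)) * ((x i k' - x l k') * (x i k' - x l k')))
         + (\<Sum>j\<in>S i. \<alpha> (Inr (i, j)) * - ((x i k' - x j k') * (x i k' - x j k')))
         \<le> max (\<Sum>l\<in>D i. \<alpha> (Inl (i, l)) * x l k)
       (x i k * ((\<Sum>l\<in>D i. \<alpha> (Inl (i, l))) - (\<Sum>j\<in>S i. \<alpha> (Inr (i, j)) * (1 - x j k))))"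
    proof (cases "x i k' = 0")
      case True
      have "(\<Sum>l\<in>D i. \<alpha> (Inl (i, l)) * ((x i k' - x l k') * (x i k' - x l k'))) \<le> (\<Sum>l\<in>D i. \<alpha> (Inl (i, l)) * x l k)"
      proof (rule sum_mono)
        fix l assume l: "l \<in> D i"
        have "(x i k' - x l k') * (x i k' - x l k') = x l k'" using True bink'[OF lD[OF l]] by auto
        also have "\<dots> \<le> x l k" using anti[OF lD[OF l]] .
        finally show "\<alpha> (Inl (i, l)) * ((x i k' - x l k') * (x i k' - x l k')) \<le> \<alpha> (Inl (i, l)) * x l k"
          using aD[OF l] by (simp add: mult_left_mono)
      qed
      moreover have "(\<Sum>j\<in>S i. \<alpha> (Inr (i, j)) * - ((x i k' - x j k') * (x i k' - x j k'))) \<le> 0"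
        by (rule sum_nonpos) (simp add: aS mult_nonneg_nonpos)
      ultimately show ?thesis by linarith
    next
      case False
      hence x1: "x i k' = 1" using bink'[OF i] by auto
      hence xk: "x i k = 1" using anti[OF i] bink[OF i] by auto
      have "(\<Sum>l\<in>D i. \<alpha> (Inl (i, l)) * ((x i k' - x l k') * (x i k' - x l k'))) \<le> (\<Sum>l\<in>D i. \<alpha> (Inl (i, l)))"
      proof (rule sum_mono)
        fix l assume l: "l \<in> D i"
        have "(x i k' - x l k') * (x i k' - x l k') \<le> 1" using x1 bink'[OF lD[OF l]] by auto
        then show "\<alpha> (Inl (i, l)) * ((x i k' - x l k') * (x i k' - x l k')) \<le> \<alpha> (Inl (i, l))"
          using aD[OF l] mult_left_mono[of _ 1 "\<alpha> (Inl (i, l))"] by simp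
      qed
      moreover have "(\<Sum>j\<in>S i. \<alpha> (Inr (i, j)) * - ((x i k' - x j k') * (x i k' - x j k'))) \<le>
          - (\<Sum>j\<in>S i. \<alpha> (Inr (i, j)) * (1 - x j k))"
        unfolding sum_negf[symmetric]
      proof (rule sum_mono)
        fix j assume j: "j \<in> S i"
        have "1 - x j k \<le> (x i k' - x j k') * (x i k' - x j k')"
          using x1 bink'[OF lS[OF j]] anti[OF lS[OF j]] by auto
        then show "\<alpha> (Inr (i, j)) * - ((x i k' - x j k') * (x i k' - x j k')) \<le> - (\<alpha> (Inr (i, j)) * (1 - x j k))"
          using aS[OF j] by (simp add: mult_left_mono)
      qed
      ultimately show ?thesis using xk by simp
    qed
  qed
  finally show ?thesis .
qed

lemma A_split:
  assumes th: "0 \<le> \<theta>"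
  shows "Aof n D S x k (\<lambda>q. \<theta> * v q + d q) \<le> \<theta> * Aof n D S x k v + (\<Sum>q\<in>QQ n D S. \<bar>d q\<bar> * ww x k q)"
proof -
  have "Aof n D S x k (\<lambda>q. \<theta> * v q + d q) \<le> (\<Sum>i\<in>{1..n}. \<theta> * max (\<Sum>l\<in>D i. v (Inl (i, l)) * x l k)
       (x i k * ((\<Sum>l\<in>D i. v (Inl (i, l))) - (\<Sum>j\<in>S i. v (Inr (i, j)) * (1 - x j k))))
       + ((\<Sum>l\<in>D i. \<bar>d (Inl (i, l))\<bar> * ww x k (Inl (i, l))) + (\<Sum>j\<in>S i. \<bar>d (Inr (i, j))\<bar> * ww x k (Inr (i, j)))))"
    unfolding Aof_def
  proof (rule sum_mono)
    fix i assume i: "i \<in> {1..n}"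
    have lD: "l \<in> {1..n}" if "l \<in> D i" for l using Dsub[OF i] that by blast
    have lS: "l \<in> {1..n}" if "l \<in> S i" for l using Ssub[OF i] that by blast
    define U0 where "U0 = (\<Sum>l\<in>D i. v (Inl (i, l)) * x l k)"
    define V0 where "V0 = x i k * ((\<Sum>l\<in>D i. v (Inl (i, l))) - (\<Sum>j\<in>S i. v (Inr (i, j)) * (1 - x j k)))"
    define U1 where "U1 = (\<Sum>l\<in>D i. d (Inl (i, l)) * x l k)"
    define V1 where "V1 = x i k * ((\<Sum>l\<in>D i. d (Inl (i, l))) - (\<Sum>j\<in>S i. d (Inr (i, j)) * (1 - x j k)))"
    define W where "W = (\<Sum>l\<in>D i. \<bar>d (Inl (i, l))\<bar> * ww x k (Inl (i, l))) + (\<Sum>j\<in>S i. \<bar>d (Inr (i, j))\<bar> * ww x k (Inr (i, j)))"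
    have eU: "(\<Sum>l\<in>D i. (\<theta> * v (Inl (i, l)) + d (Inl (i, l))) * x l k) = \<theta> * U0 + U1"
      unfolding U0_def U1_def by (simp add: sum.distrib sum_distrib_left algebra_simps)
    have eV: "x i k * ((\<Sum>l\<in>D i. \<theta> * v (Inl (i, l)) + d (Inl (i, l))) - (\<Sum>j\<in>S i. (\<theta> * v (Inr (i, j)) + d (Inr (i, j))) * (1 - x j k)))
        = \<theta> * V0 + V1"
      unfolding V0_def V1_def by (simp add: sum.distrib sum_subtractf sum_distrib_left algebra_simps)
    have W1: "(\<Sum>l\<in>D i. \<bar>d (Inl (i, l))\<bar> * ww x k (Inl (i, l))) \<ge> 0"
      by (rule sum_nonneg) (use bink[OF i] bink[OF lD] in \<open>auto simp: max_def\<close>)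
    have W2: "(\<Sum>j\<in>S i. \<bar>d (Inr (i, j))\<bar> * ww x k (Inr (i, j))) \<ge> 0"
      by (rule sum_nonneg) (use bink[OF i] bink[OF lS] in \<open>auto simp: max_def\<close>)
    have "U1 \<le> (\<Sum>l\<in>D i. \<bar>d (Inl (i, l))\<bar> * ww x k (Inl (i, l)))"
      unfolding U1_def
    proof (rule sum_mono)
      fix l assume l: "l \<in> D i"
      show "d (Inl (i, l)) * x l k \<le> \<bar>d (Inl (i, l))\<bar> * ww x k (Inl (i, l))"
        using bink[OF i] bink[OF lD[OF l]] by (auto simp: max_def)
    qed
    hence U1W: "U1 \<le> W" unfolding W_def using W2 by linarith
    have "V1 = (\<Sum>l\<in>D i. x i k * d (Inl (i, l))) + (\<Sum>j\<in>S i. - (x i k * d (Inr (i, j)) * (1 - x j k)))"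
      unfolding V1_def right_diff_distrib sum_distrib_left sum_negf by (simp add: mult.assoc)
    also have "\<dots> \<le> W" unfolding W_def
    proof (rule add_mono; rule sum_mono)
      fix l assume l: "l \<in> D i"
      show "x i k * d (Inl (i, l)) \<le> \<bar>d (Inl (i, l))\<bar> * ww x k (Inl (i, l))"
        using bink[OF i] bink[OF lD[OF l]] by (auto simp: max_def)
    next
      fix j assume j: "j \<in> S i"
      show "- (x i k * d (Inr (i, j)) * (1 - x j k)) \<le> \<bar>d (Inr (i, j))\<bar> * ww x k (Inr (i, j))"
        using bink[OF i] bink[OF lS[OF j]] by (auto simp: max_def)
    qed
    finally have V1W: "V1 \<le> W" .
    have "max (\<theta> * U0 + U1) (\<theta> * V0 + V1) \<le> \<theta> * max U0 V0 + W"
    proof -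
      have "\<theta> * U0 \<le> \<theta> * max U0 V0" "\<theta> * V0 \<le> \<theta> * max U0 V0" using th by (simp_all add: mult_left_mono)
      thus ?thesis using U1W V1W by simp
    qed
    thus "max (\<Sum>l\<in>D i. (\<theta> * v (Inl (i, l)) + d (Inl (i, l))) * x l k)
          (x i k * ((\<Sum>l\<in>D i. \<theta> * v (Inl (i, l)) + d (Inl (i, l))) - (\<Sum>j\<in>S i. (\<theta> * v (Inr (i, j)) + d (Inr (i, j))) * (1 - x j k))))
         \<le> \<theta> * max (\<Sum>l\<in>D i. v (Inl (i, l)) * x l k)
       (x i k * ((\<Sum>l\<in>D i. v (Inl (i, l))) - (\<Sum>j\<in>S i. v (Inr (i, j)) * (1 - x j k))))
       + ((\<Sum>l\<in>D i. \<bar>d (Inl (i, l))\<bar> * ww x k (Inl (i, l))) + (\<Sum>j\<in>S i. \<bar>d (Inr (i, j))\<bar> * ww x k (Inr (i, j))))"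
      unfolding eU eV U0_def[symmetric] V0_def[symmetric] W_def[symmetric] .
  qed
  also have "\<dots> = \<theta> * Aof n D S x k v + (\<Sum>q\<in>QQ n D S. \<bar>d q\<bar> * ww x k q)"
    unfolding Aof_def sum.distrib sum_distrib_left
    apply (subst sum_QQ[OF fD' fS']) apply assumption by (simp add: sum.distrib)
  finally show ?thesis .
qed

lemma ww_L2:
  "L2_set (ww x k) (QQ n D S) = sqrt (\<Sum>i\<in>{1..n}. (\<Sum>l\<in>D i. max (x i k) (x l k)) + (\<Sum>j\<in>S i. max (x i k) (x j k)))"
proof -
  have "(\<Sum>q\<in>QQ n D S. (ww x k q)^2) = (\<Sum>i\<in>{1..n}. (\<Sum>l\<in>D i. max (x i k) (x l k)) + (\<Sum>j\<in>S i. max (x i k) (x j k)))"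
    apply (subst sum_QQ[OF fD' fS']) apply assumption
  proof (rule sum.cong[OF refl])
    fix i assume i: "i \<in> {1..n}"
    have lD: "l \<in> {1..n}" if "l \<in> D i" for l using Dsub[OF i] that by blast
    have lS: "l \<in> {1..n}" if "l \<in> S i" for l using Ssub[OF i] that by blast
    have "(\<Sum>l\<in>D i. (ww x k (Inl (i, l)))^2) = (\<Sum>l\<in>D i. max (x i k) (x l k))"
      by (rule sum.cong[OF refl]) (use bink[OF i] bink[OF lD] in \<open>auto simp: max_def power2_eq_square\<close>)
    moreover have "(\<Sum>l\<in>S i. (ww x k (Inr (i, l)))^2) = (\<Sum>l\<in>S i. max (x i k) (x l k))"
      by (rule sum.cong[OF refl]) (use bink[OF i] bink[OF lS] in \<open>auto simp: max_def power2_eq_square\<close>)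
    ultimately show "(\<Sum>l\<in>D i. (ww x k (Inl (i, l)))^2) + (\<Sum>j\<in>S i. (ww x k (Inr (i, j)))^2) =
         (\<Sum>l\<in>D i. max (x i k) (x l k)) + (\<Sum>j\<in>S i. max (x i k) (x j k))" by simp
  qed
  thus ?thesis unfolding L2_set_def by simp
qed

lemma ww_abs: "q \<in> QQ n D S \<Longrightarrow> \<bar>ww x k q\<bar> = ww x k q"
proof -
  assume q: "q \<in> QQ n D S"
  have "0 \<le> ww x k q"
    using q unfolding QQ_def
  proof (rule PlusE)
    fix z assume z: "z \<in> (SIGMA i:{1..n}. D i)" "q = Inl z"
    then obtain i l where "z = (i, l)" "i \<in> {1..n}" by blast
    then show ?thesis using z bink[of i] by (auto simp: max_def)
  next
    fix z assume z: "z \<in> (SIGMA i:{1..n}. S i)" "q = Inr z"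
    then obtain i l where "z = (i, l)" "i \<in> {1..n}" by blast
    then show ?thesis using z bink[of i] by (auto simp: max_def)
  qed
  thus ?thesis by simp
qed

lemma dw_le: "(\<Sum>q\<in>QQ n D S. \<bar>d q\<bar> * ww x k q) \<le> L2_set d (QQ n D S) * L2_set (ww x k) (QQ n D S)"
proof -
  have "(\<Sum>q\<in>QQ n D S. \<bar>d q\<bar> * ww x k q) = (\<Sum>q\<in>QQ n D S. \<bar>d q\<bar> * \<bar>ww x k q\<bar>)"
    by (rule sum.cong) (simp_all add: ww_abs)
  also have "\<dots> \<le> L2_set d (QQ n D S) * L2_set (ww x k) (QQ n D S)" by (rule L2_set_mult_ineq)
  finally show ?thesis .
qed

end

theorem theorem8:
  fixes n K p :: nat
    and D S :: "nat \<Rightarrow> nat set"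
    and x :: "nat \<Rightarrow> nat \<Rightarrow> real"
    and desc :: "nat \<Rightarrow> nat \<Rightarrow> bool"
    and L U \<eta> lam lam0 \<epsilon> :: real
    and a0D a0S a0sD a0sS :: "nat \<Rightarrow> nat \<Rightarrow> real"
    and mstar :: "nat \<Rightarrow> real"
    and k :: nat
  assumes "1 \<le> n" "1 \<le> K" "1 \<le> p"
    and "\<And>i. i \<in> {1..n} \<Longrightarrow> D i \<subseteq> {1..n} \<and> card (D i) = K"
    and "\<And>i. i \<in> {1..n} \<Longrightarrow> S i \<subseteq> {1..n} \<and> card (S i) = K"
    and "L \<ge> U" "U \<ge> 0" "\<eta> > 0"
    \<comment> \<open>tree structure: desc k' k means k' is a descendant of k; features are antimonotone\<close>
    and "\<And>k k' i. k \<in> {1..p} \<Longrightarrow> k' \<in> {1..p} \<Longrightarrow> desc k' k \<Longrightarrow> i \<in> {1..n} \<Longrightarrow> x i k' \<le> x i k"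
    \<comment> \<open>binary features\<close>
    and "\<And>i k. i \<in> {1..n} \<Longrightarrow> k \<in> {1..p} \<Longrightarrow> x i k = 0 \<or> x i k = 1"
    and "0 < lam" "lam \<le> lam0"
    \<comment> \<open>alpha0-star is the optimal solution of the dual at lambda0\<close>
    and "dual_nonneg n D S a0sD a0sS"
    and "\<And>bD bS. dual_nonneg n D S bD bS \<Longrightarrow>
           Dual n p D S x L U \<eta> lam0 bD bS \<le> Dual n p D S x L U \<eta> lam0 a0sD a0sS"
    and "dual_nonneg n D S a0D a0S"
    and "\<epsilon> \<ge> 0"
    and "sqrt (sqnorm n D S (\<lambda>i l. a0D i l - a0sD i l) (\<lambda>i j. a0S i j - a0sS i j)) \<le> \<epsilon>"
    \<comment> \<open>m-star is the optimal solution of the primal at lambda\<close>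
    and "\<forall>k\<in>{1..p}. 0 \<le> mstar k"
    and "\<And>m. \<forall>k\<in>{1..p}. 0 \<le> m k \<Longrightarrow>
           Primal n p D S x L U \<eta> lam mstar \<le> Primal n p D S x L U \<eta> lam m"
    and "k \<in> {1..p}"
    and "(let a = (\<Sum>i\<in>{1..n}. max (\<Sum>l\<in>D i. a0D i l * x l k)
                       (x i k * ((\<Sum>l\<in>D i. a0D i l) - (\<Sum>j\<in>S i. a0S i j * (1 - x j k)))));
              b = sqrt (\<Sum>i\<in>{1..n}. (\<Sum>l\<in>D i. max (x i k) (x l k)) + (\<Sum>j\<in>S i. max (x i k) (x j k)));
              na = sqrt (sqnorm n D S a0D a0S)
          in lam0 * (2 * \<epsilon> * b + na * b + a) / (2 * lam0 + na * b - a)) \<le> lam"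
  shows "\<forall>k'\<in>{1..p}. (k' = k \<or> desc k' k) \<longrightarrow> mstar k' = 0"
proof -
  have Dsub: "\<And>i. i \<in> {1..n} \<Longrightarrow> D i \<subseteq> {1..n}" using assms(4) by blast
  have Ssub: "\<And>i. i \<in> {1..n} \<Longrightarrow> S i \<subseteq> {1..n}" using assms(5) by blast
  have fD: "\<And>i. i \<in> {1..n} \<Longrightarrow> finite (D i)" using Dsub finite_subset by blast
  have fS: "\<And>i. i \<in> {1..n} \<Longrightarrow> finite (S i)" using Ssub finite_subset by blast
  have bink: "\<And>i. i \<in> {1..n} \<Longrightarrow> x i k = 0 \<or> x i k = 1" using assms(10) assms(20) by blast
  define Q where "Q = QQ n D S"
  have finQ: "finite Q" unfolding Q_def by (rule finite_QQ[OF fD fS])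
  have finK: "finite {1..p}" by simp
  define t where "t = tt L U"
  have eta: "\<eta> > 0" using assms(8) .
  have lam: "lam > 0" using assms(11) .
  have lam0: "lam0 > 0" using assms(11,12) by linarith
  define a0s where "a0s = vec a0sD a0sS"
  have a0snn: "\<forall>q\<in>Q. 0 \<le> a0s q" using assms(13) nonneg_eq[OF fD fS] by (simp add: Q_def a0s_def)
  have dopt: "DD Q {1..p} (cc x) t lam0 \<eta> b \<le> DD Q {1..p} (cc x) t lam0 \<eta> a0s" if b: "\<forall>q\<in>Q. 0 \<le> b q" for b
  proof -
    define bD where "bD i l = b (Inl (i, l))" for i l
    define bS where "bS i j = b (Inr (i, j))" for i j
    have vb: "vec bD bS = b"
    proof
      fix q show "vec bD bS q = b q" by (cases q) (auto simp: bD_def bS_def)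
    qed
    have "dual_nonneg n D S bD bS" using b nonneg_eq[OF fD fS] vb by (simp add: Q_def)
    from assms(14)[OF this] show ?thesis using dual_eq[OF fD fS] vb by (simp add: a0s_def Q_def t_def)
  qed
  define M0 where "M0 k = max (Cv Q (cc x) a0s k - lam0) 0 / (lam0 * \<eta>)" for k
  have vi0: "(\<Sum>q\<in>Q. (- a0s q / 2 + t q - (\<Sum>k\<in>{1..p}. M0 k * cc x q k)) * (b q - a0s q)) \<le> 0"
    if "\<forall>q\<in>Q. 0 \<le> b q" for b
    using dual_vi[OF finQ finK lam0 eta a0snn dopt that] unfolding M0_def by blast
  have popt: "PP Q {1..p} (cc x) t lam \<eta> mstar \<le> PP Q {1..p} (cc x) t lam \<eta> m" if "\<forall>k\<in>{1..p}. 0 \<le> m k" for m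
    using assms(19)[OF that] primal_eq[OF fD fS] by (simp add: Q_def t_def)
  define a1 where "a1 q = 2 * max (t q - Ctm {1..p} (cc x) mstar q) 0" for q
  have kkt: "mstar j = max (Cv Q (cc x) a1 j - lam) 0 / (lam * \<eta>)" if "j \<in> {1..p}" for j
    using primal_kkt[OF finQ finK lam eta assms(18) popt that] unfolding a1_def by blast
  define M1 where "M1 k = max (Cv Q (cc x) a1 k - lam) 0 / (lam * \<eta>)" for k
  have a1nn: "\<forall>q\<in>Q. 0 \<le> a1 q" by (simp add: a1_def)
  have vi1: "(\<Sum>q\<in>Q. (- a1 q / 2 + t q - (\<Sum>k\<in>{1..p}. M1 k * cc x q k)) * (b q - a1 q)) \<le> 0"
    if b: "\<forall>q\<in>Q. 0 \<le> b q" for b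
  proof -
    have e: "(\<Sum>k\<in>{1..p}. M1 k * cc x q k) = Ctm {1..p} (cc x) mstar q" for q
      unfolding Ctm_def by (rule sum.cong[OF refl]) (simp add: M1_def kkt)
    show ?thesis unfolding e
      by (rule sum_nonpos) (use b in \<open>auto simp: a1_def max_def mult_nonpos_nonneg\<close>)
  qed
  define \<theta> where "\<theta> = (lam0 + lam) / (2 * lam0)"
  define \<rho> where "\<rho> = (lam0 - lam) / (2 * lam0)"
  have th0: "\<theta> \<ge> 0" unfolding \<theta>_def using lam lam0 by simp
  have rh0: "\<rho> \<ge> 0" unfolding \<rho>_def using assms(12) lam0 by simp
  have thrh: "\<theta> + \<rho> = 1" unfolding \<theta>_def \<rho>_def using lam0 by (simp add: field_simps)
  have ball: "(\<Sum>q\<in>Q. (a1 q - \<theta> * a0s q)^2) \<le> \<rho>^2 * (\<Sum>q\<in>Q. (a0s q)^2)"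
    unfolding \<theta>_def \<rho>_def
    by (rule ball_lemma[OF finQ finK lam assms(12) eta a0snn a1nn])
       (use vi1 vi0 in \<open>simp_all add: M1_def M0_def\<close>)
  define a0 where "a0 = vec a0D a0S"
  define na where "na = sqrt (sqnorm n D S a0D a0S)"
  have na_eq: "na = L2_set a0 Q" unfolding na_def L2_set_def by (simp only: sqnorm_eq[OF fD fS] a0_def Q_def)
  have vdiff: "vec (\<lambda>i l. a0D i l - a0sD i l) (\<lambda>i j. a0S i j - a0sS i j) = (\<lambda>q. a0 q - a0s q)"
  proof
    fix q show "vec (\<lambda>i l. a0D i l - a0sD i l) (\<lambda>i j. a0S i j - a0sS i j) q = a0 q - a0s q"
      by (cases q) (auto simp: a0_def a0s_def)
  qed
  have epsb: "L2_set (\<lambda>q. a0 q - a0s q) Q \<le> \<epsilon>"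
  proof -
    have "sqnorm n D S (\<lambda>i l. a0D i l - a0sD i l) (\<lambda>i j. a0S i j - a0sS i j) = (\<Sum>q\<in>Q. (a0 q - a0s q)^2)"
      by (simp only: sqnorm_eq[OF fD fS] vdiff Q_def)
    thus ?thesis using assms(17) by (simp add: L2_set_def)
  qed
  have epsb': "L2_set (\<lambda>q. a0s q - a0 q) Q \<le> \<epsilon>"
  proof -
    have "L2_set (\<lambda>q. a0s q - a0 q) Q = L2_set (\<lambda>q. a0 q - a0s q) Q"
      unfolding L2_set_def by (simp add: power2_commute)
    thus ?thesis using epsb by simp
  qed
  have B1: "L2_set (\<lambda>q. a1 q - \<theta> * a0s q) Q \<le> \<rho> * L2_set a0s Q"
  proof -
    have "L2_set (\<lambda>q. a1 q - \<theta> * a0s q) Q \<le> sqrt (\<rho>^2 * (\<Sum>q\<in>Q. (a0s q)^2))"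
      unfolding L2_set_def using ball by (rule real_sqrt_le_mono)
    also have "\<dots> = \<rho> * L2_set a0s Q" unfolding L2_set_def using rh0 by (simp add: real_sqrt_mult)
    finally show ?thesis .
  qed
  have B2: "L2_set a0s Q \<le> na + \<epsilon>"
  proof -
    have "L2_set a0s Q = L2_set (\<lambda>q. a0 q + (a0s q - a0 q)) Q" by simp
    also have "\<dots> \<le> L2_set a0 Q + L2_set (\<lambda>q. a0s q - a0 q) Q" by (rule L2_set_triangle_ineq)
    finally show ?thesis using epsb' na_eq by simp
  qed
  have B3: "L2_set (\<lambda>q. a1 q - \<theta> * a0 q) Q \<le> \<rho> * na + \<epsilon>"
  proof -
    have "L2_set (\<lambda>q. a1 q - \<theta> * a0 q) Q = L2_set (\<lambda>q. (a1 q - \<theta> * a0s q) + \<theta> * (a0s q - a0 q)) Q"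
      by (simp add: algebra_simps)
    also have "\<dots> \<le> L2_set (\<lambda>q. a1 q - \<theta> * a0s q) Q + L2_set (\<lambda>q. \<theta> * (a0s q - a0 q)) Q"
      by (rule L2_set_triangle_ineq)
    also have "L2_set (\<lambda>q. \<theta> * (a0s q - a0 q)) Q = \<theta> * L2_set (\<lambda>q. a0s q - a0 q) Q"
      by (rule L2_set_right_distrib[OF th0, symmetric])
    finally have "L2_set (\<lambda>q. a1 q - \<theta> * a0 q) Q \<le> \<rho> * (na + \<epsilon>) + \<theta> * \<epsilon>"
      using B1 B2 epsb' rh0 th0 mult_left_mono[OF B2 rh0] mult_left_mono[OF epsb' th0] by linarith
    moreover have "\<rho> * (na + \<epsilon>) + \<theta> * \<epsilon> = \<rho> * na + \<epsilon> * (\<theta> + \<rho>)" by (simp add: algebra_simps)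
    ultimately show ?thesis using thrh by simp
  qed
  define a where "a = Aof n D S x k a0"
  define b where "b = sqrt (\<Sum>i\<in>{1..n}. (\<Sum>l\<in>D i. max (x i k) (x l k)) + (\<Sum>j\<in>S i. max (x i k) (x j k)))"
  have b_eq: "b = L2_set (ww x k) Q" unfolding b_def Q_def by (rule ww_L2[where n=n and D=D and S=S and x=x and k=k, OF Dsub Ssub bink, symmetric])
  have b0: "b \<ge> 0" unfolding b_eq by simp
  have na0: "na \<ge> 0" unfolding na_eq by simp
  have a_le: "a \<le> na * b"
  proof -
    have "a = Aof n D S x k (\<lambda>q. 0 * a0 q + a0 q)" unfolding a_def by simp
    also have "\<dots> \<le> 0 * Aof n D S x k a0 + (\<Sum>q\<in>QQ n D S. \<bar>a0 q\<bar> * ww x k q)"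
      by (rule A_split[where n=n and D=D and S=S and x=x and k=k and \<theta>=0, OF Dsub Ssub bink order_refl])
    also have "\<dots> \<le> L2_set a0 (QQ n D S) * L2_set (ww x k) (QQ n D S)"
      using dw_le[where n=n and D=D and S=S and x=x and k=k, OF Dsub Ssub bink] by simp
    finally show ?thesis unfolding na_eq b_eq Q_def .
  qed
  have hyp: "lam0 * (2 * \<epsilon> * b + na * b + a) / (2 * lam0 + na * b - a) \<le> lam"
    using assms(21) unfolding a_def b_def na_def Aof_def a0_def Let_def by simp
  have den: "2 * lam0 + na * b - a > 0" using a_le lam0 by linarith
  have hyp2: "lam0 * (2 * \<epsilon> * b + na * b + a) \<le> lam * (2 * lam0 + na * b - a)"
    using hyp den by (simp add: pos_divide_le_eq)
  show ?thesis
  proof (intro ballI impI)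
    fix kp assume kp: "kp \<in> {1..p}" "kp = k \<or> desc kp k"
    have anti: "x i kp \<le> x i k" if "i \<in> {1..n}" for i
      using kp assms(9)[OF assms(20) kp(1) _ that] by auto
    have binkp: "x i kp = 0 \<or> x i kp = 1" if "i \<in> {1..n}" for i using assms(10) that kp(1) by blast
    have C1: "Cv Q (cc x) a1 kp \<le> Aof n D S x k a1"
    proof -
      have a1nn': "\<forall>q\<in>QQ n D S. 0 \<le> a1 q" using a1nn by (simp add: Q_def)
      show ?thesis using calpha_le_A[where n=n and D=D and S=S and x=x and k=k, OF Dsub Ssub bink binkp anti a1nn'] by (simp add: Q_def)
    qed
    also have "Aof n D S x k a1 = Aof n D S x k (\<lambda>q. \<theta> * a0 q + (a1 q - \<theta> * a0 q))" by simp
    also have "\<dots> \<le> \<theta> * a + (\<Sum>q\<in>QQ n D S. \<bar>a1 q - \<theta> * a0 q\<bar> * ww x k q)"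
      unfolding a_def by (rule A_split[where n=n and D=D and S=S and x=x and k=k, OF Dsub Ssub bink th0])
    also have "\<dots> \<le> \<theta> * a + L2_set (\<lambda>q. a1 q - \<theta> * a0 q) Q * b"
      using dw_le[where n=n and D=D and S=S and x=x and k=k, OF Dsub Ssub bink, of "\<lambda>q. a1 q - \<theta> * a0 q"] unfolding b_eq Q_def by simp
    also have "\<dots> \<le> \<theta> * a + (\<rho> * na + \<epsilon>) * b"
      using mult_right_mono[OF B3 b0] by simp
    finally have C: "Cv Q (cc x) a1 kp \<le> \<theta> * a + (\<rho> * na + \<epsilon>) * b" .
    show "mstar kp = 0"
    proof (rule ccontr)
      assume "mstar kp \<noteq> 0"
      hence "mstar kp > 0" using assms(18) kp(1) by force
      hence "Cv Q (cc x) a1 kp > lam" unfolding kkt[OF kp(1)] using lam eta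
        by (auto simp: max_def split: if_splits)
      with C have "lam < \<theta> * a + (\<rho> * na + \<epsilon>) * b" by linarith
      hence "2 * lam0 * lam < 2 * lam0 * (\<theta> * a + (\<rho> * na + \<epsilon>) * b)" using lam0 by simp
      also have "\<dots> = (lam0 + lam) * a + (lam0 - lam) * na * b + 2 * lam0 * \<epsilon> * b"
        unfolding \<theta>_def \<rho>_def using lam0 by (simp add: field_simps)
      finally have h1: "2 * lam0 * lam < (lam0 + lam) * a + (lam0 - lam) * na * b + 2 * lam0 * \<epsilon> * b" .
      from hyp2 h1 show False by (simp add: algebra_simps)
    qed
  qed
qed

end
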